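(* Let $A\in\mathbf{R}^{n\times n}$, $C_i\in\mathbf{R}^{m_i\times n}$ ($i=1,\ldots,N$), $H\in\mathbf{R}^{p\times n}$, and let $\mathcal{L}$ be the Laplacian of a directed graph on $N$ nodes. Set $\bar A=I_N\otimes A$, $\bar C=\mathrm{diag}[C_1,\ldots,C_N]$, $\bar H=\mathcal{L}\otimes H$. Then the pair $\left(\begin{bmatrix}\bar C\\ \bar H\end{bmatrix},\bar A\right)$ is detectable if and only if $$\bar{\mathcal{O}}\cap \prod_{i=1}^N\mathcal{C}_i=\{0\},$$ where $\mathcal{C}_i$ is the undetectable subspace of $(C_i,A)$ and $\bar{\mathcal{O}}=\bigcap_{l=1}^{nN}\operatorname{Ker}(\bar H\bar A^{l-1})$ is the unobservable subspace of $(\bar H,\bar A)$.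
   Context: Directed graph $\mathbf{G}=(\mathbf{V},\mathbf{E})$, $\mathbf{V}=\{1,\ldots,N\}$, without self-loops; $(j,i)\in\mathbf{E}$ denotes an edge from $j$ to $i$. Adjacency matrix $\mathbf{A}=[\mathbf{a}_{ij}]$ with $\mathbf{a}_{ij}=1$ if $(j,i)\in\mathbf{E}$ and $0$ otherwise; $p_i$ is the in-degree of node $i$; the Laplacian is $\mathcal{L}=\mathrm{diag}[p_1,\ldots,p_N]-\mathbf{A}$. For a matrix $F\in\mathbf{R}^{n\times n}$ with minimal polynomial $\alpha_F(s)$, factor $\alpha_F=\alpha_F^-\alpha_F^+$ where the zeros of $\alpha_F^-$ lie in the open left half-plane and those of $\alpha_F^+$ in the closed right half-plane. The undetectable subspace of a pair $(G,F)$, $G\in\mathbf{R}^{m\times n}$, is $\bigcap_{l=1}^n\operatorname{Ker}(GF^{l-1})\cap\operatorname{Ker}\alpha_F^+(F)$; the pair is detectable iff this subspace is $\{0\}$. $\prod_{i=1}^N\mathcal{C}_i\subseteq\mathbf{R}^{nN}$ denotes the set of stacked vectors $[x_1';\ldots;x_N']'$ with $x_i\in\mathcal{C}_i$. *)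

theory Defs
  imports "Jordan_Normal_Form.Matrix_Kernel" "HOL-Computational_Algebra.Polynomial"
begin

definition mat_poly_eval :: "nat \<Rightarrow> real poly \<Rightarrow> real mat \<Rightarrow> real mat" where
  "mat_poly_eval n p F = foldr (\<lambda>c M. c \<cdot>\<^sub>m 1\<^sub>m n + F * M) (coeffs p) (0\<^sub>m n n)"

definition min_poly :: "nat \<Rightarrow> real mat \<Rightarrow> real poly" where
  "min_poly n F = (THE p. lead_coeff p = 1 \<and> mat_poly_eval n p F = 0\<^sub>m n n \<and>
      (\<forall>q. q \<noteq> 0 \<longrightarrow> mat_poly_eval n q F = 0\<^sub>m n n \<longrightarrow> degree p \<le> degree q))"

(* alpha^+ : the (monic, real) factor of a real polynomial collecting all its
   (complex) zeros in the closed right half-plane, with multiplicities *)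
definition unstable_part :: "real poly \<Rightarrow> real poly" where
  "unstable_part a = (let ac = map_poly complex_of_real a in
     map_poly Re (\<Prod>z\<in>{z. poly ac z = 0 \<and> Re z \<ge> 0}. [:- z, 1:] ^ order z ac))"

definition undetectable_subspace :: "nat \<Rightarrow> real mat \<Rightarrow> real mat \<Rightarrow> real vec set" where
  "undetectable_subspace n G F =
     {x \<in> carrier_vec n. \<forall>l\<in>{1..n}. (G * F ^\<^sub>m (l - 1)) *\<^sub>v x = 0\<^sub>v (dim_row G)}
     \<inter> mat_kernel (mat_poly_eval n (unstable_part (min_poly n F)) F)"

definition detectable :: "nat \<Rightarrow> real mat \<Rightarrow> real mat \<Rightarrow> bool" where
  "detectable n G F \<longleftrightarrow> undetectable_subspace n G F = {0\<^sub>v n}"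

definition unobservable_subspace :: "nat \<Rightarrow> real mat \<Rightarrow> real mat \<Rightarrow> real vec set" where
  "unobservable_subspace n G F =
     {x \<in> carrier_vec n. \<forall>l\<in>{1..n}. (G * F ^\<^sub>m (l - 1)) *\<^sub>v x = 0\<^sub>v (dim_row G)}"

definition kron :: "real mat \<Rightarrow> real mat \<Rightarrow> real mat" where
  "kron A B = mat (dim_row A * dim_row B) (dim_col A * dim_col B)
     (\<lambda>(i,j). A $$ (i div dim_row B, j div dim_col B) * B $$ (i mod dim_row B, j mod dim_col B))"

definition vstack :: "real mat \<Rightarrow> real mat \<Rightarrow> real mat" where
  "vstack A B = mat (dim_row A + dim_row B) (dim_col A)
     (\<lambda>(i,j). if i < dim_row A then A $$ (i,j) else B $$ (i - dim_row A, j))"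

definition row_off :: "(nat \<Rightarrow> real mat) \<Rightarrow> nat \<Rightarrow> nat" where
  "row_off C i = (\<Sum>k<i. dim_row (C k))"

definition block_diag :: "nat \<Rightarrow> nat \<Rightarrow> (nat \<Rightarrow> real mat) \<Rightarrow> real mat" where
  "block_diag N n C = mat (row_off C N) (N * n)
     (\<lambda>(r,c). let i = (LEAST i. r < row_off C (Suc i)) in
        if c div n = i then C i $$ (r - row_off C i, c mod n) else 0)"

(* Laplacian of a directed graph on nodes {0..<N}; (j,i) \<in> E is an edge from j to i;
   a_ij = 1 iff (j,i) \<in> E; p_i = in-degree of i *)
definition laplacian :: "nat \<Rightarrow> (nat \<times> nat) set \<Rightarrow> real mat" where
  "laplacian N E = mat N N (\<lambda>(i,j).
     (if i = j then real (card {k. k < N \<and> (k,i) \<in> E}) else 0) - (if (j,i) \<in> E then 1 else 0))"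

definition prod_subspaces :: "nat \<Rightarrow> nat \<Rightarrow> (nat \<Rightarrow> real vec set) \<Rightarrow> real vec set" where
  "prod_subspaces N n S = {x \<in> carrier_vec (N * n). \<forall>i<N. vec n (\<lambda>k. x $ (i * n + k)) \<in> S i}"

end

theory Submission
  imports Defs "Jordan_Normal_Form.VS_Connect"
begin


definition blk :: "nat \<Rightarrow> nat \<Rightarrow> real vec \<Rightarrow> real vec" where
  "blk n i x = vec n (\<lambda>k. x $ (i * n + k))"

lemma blk_carrier[simp]: "blk n i x \<in> carrier_vec n" "dim_vec (blk n i x) = n"
  by (auto simp: blk_def)

lemma blk_index[simp]: "k < n \<Longrightarrow> blk n i x $ k = x $ (i * n + k)"
  by (simp add: blk_def)

lemma idx_lt: "i < N \<Longrightarrow> k < n \<Longrightarrow> i * n + k < N * (n::nat)"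
proof -
  assume "i < N" "k < n"
  hence "i * n + k < i * n + n" by simp
  also have "\<dots> = Suc i * n" by simp
  also have "\<dots> \<le> N * n" using \<open>i < N\<close> by (intro mult_le_mono1) simp
  finally show ?thesis .
qed

lemma blk_eq_iff:
  assumes "x \<in> carrier_vec (N * n)" "y \<in> carrier_vec (N * n)"
  shows "x = y \<longleftrightarrow> (\<forall>i<N. blk n i x = blk n i y)"
proof
  assume "\<forall>i<N. blk n i x = blk n i y"
  show "x = y"
  proof (rule eq_vecI)
    show "dim_vec x = dim_vec y" using assms by simp
    fix j assume "j < dim_vec y"
    hence j: "j < N * n" using assms by simp
    hence n0: "n > 0" by (cases n) auto
    have jd: "j div n < N" using j by (simp add: less_mult_imp_div_less)
    have jm: "j mod n < n" using n0 by simp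
    have "j = j div n * n + j mod n" by simp
    then have "x $ j = blk n (j div n) x $ (j mod n)" "y $ j = blk n (j div n) y $ (j mod n)"
      using jm by (simp_all)
    then show "x $ j = y $ j" using \<open>\<forall>i<N. _\<close> jd by simp
  qed
qed simp

lemma blk_add: "x \<in> carrier_vec (N*n) \<Longrightarrow> y \<in> carrier_vec (N*n) \<Longrightarrow> i < N \<Longrightarrow>
   blk n i (x + y) = blk n i x + blk n i y"
  by (intro eq_vecI) (auto simp: idx_lt)

lemma blk_smult: "x \<in> carrier_vec (N*n) \<Longrightarrow> i < N \<Longrightarrow> blk n i (c \<cdot>\<^sub>v x) = c \<cdot>\<^sub>v blk n i x"
  by (intro eq_vecI) (auto simp: idx_lt)

lemma blk_zero: "i < N \<Longrightarrow> blk n i (0\<^sub>v (N*n)) = 0\<^sub>v n"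
  by (intro eq_vecI) (auto simp: idx_lt)

lemma sum_blocks: "(\<Sum>j<N*n. f j) = (\<Sum>a<N. \<Sum>b<n. f (a*n+b::nat)) " for f :: "nat \<Rightarrow> real"
proof (induction N)
  case 0 then show ?case by simp
next
  case (Suc N)
  have "{..<Suc N * n} = {..<N*n} \<union> {N*n..<N*n+n}" by auto
  hence "(\<Sum>j<Suc N*n. f j) = (\<Sum>j<N*n. f j) + (\<Sum>j\<in>{N*n..<N*n+n}. f j)"
    unfolding mult_Suc by (metis (no_types) add.commute sum.union_disjoint finite_lessThan finite_atLeastLessThan ivl_disj_int_one(2) lessThan_atLeast0 mult_Suc)
  also have "(\<Sum>j\<in>{N*n..<N*n+n}. f j) = (\<Sum>b<n. f (N*n+b))"
    by (rule sum.reindex_bij_witness[of _ "\<lambda>j. N*n + j" "\<lambda>b. b - N*n"]) auto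
  finally show ?case using Suc by simp
qed

definition bd :: "nat \<Rightarrow> nat \<Rightarrow> real mat \<Rightarrow> real mat \<Rightarrow> bool" where
  "bd N n X M \<longleftrightarrow> X \<in> carrier_mat (N*n) (N*n) \<and> M \<in> carrier_mat n n \<and>
     (\<forall>x\<in>carrier_vec (N*n). \<forall>i<N. blk n i (X *\<^sub>v x) = M *\<^sub>v blk n i x)"

lemma bd_kron: assumes M: "M \<in> carrier_mat n n" shows "bd N n (kron (1\<^sub>m N) M) M"
  unfolding bd_def
proof (intro conjI ballI allI impI)
  show "kron (1\<^sub>m N) M \<in> carrier_mat (N*n) (N*n)" using M by (simp add: kron_def)
  show "M \<in> carrier_mat n n" by fact
  fix x :: "real vec" and i assume x: "x \<in> carrier_vec (N*n)" and i: "i < N"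
  show "blk n i (kron (1\<^sub>m N) M *\<^sub>v x) = M *\<^sub>v blk n i x"
  proof (rule eq_vecI)
    show "dim_vec (blk n i (kron (1\<^sub>m N) M *\<^sub>v x)) = dim_vec (M *\<^sub>v blk n i x)" using M by simp
    fix k assume "k < dim_vec (M *\<^sub>v blk n i x)"
    hence k: "k < n" using M by simp
    have ik: "i*n+k < N*n" using idx_lt[OF i k] .
    have dv: "(i * n + k) div n = i" "(i*n+k) mod n = k" using k by auto
    have "blk n i (kron (1\<^sub>m N) M *\<^sub>v x) $ k = (\<Sum>j<N*n. kron (1\<^sub>m N) M $$ (i*n+k, j) * x $ j)"
      using k ik M x by (simp add: kron_def scalar_prod_def atLeast0LessThan)
    also have "\<dots> = (\<Sum>a<N. \<Sum>b<n. kron (1\<^sub>m N) M $$ (i*n+k, a*n+b) * x $ (a*n+b))"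
      by (rule sum_blocks)
    also have "\<dots> = (\<Sum>a<N. if a = i then (\<Sum>b<n. M $$ (k, b) * x $ (i*n+b)) else 0)"
    proof (rule sum.cong[OF refl])
      fix a assume a: "a \<in> {..<N}"
      show "(\<Sum>b<n. kron (1\<^sub>m N) M $$ (i*n+k, a*n+b) * x $ (a*n+b)) =
            (if a = i then (\<Sum>b<n. M $$ (k, b) * x $ (i*n+b)) else 0)"
        using a ik M k i idx_lt[of a N _ n] by (auto simp: kron_def dv intro!: sum.cong)
    qed
    also have "\<dots> = (\<Sum>b<n. M $$ (k, b) * x $ (i*n+b))" using i by simp
    also have "\<dots> = (M *\<^sub>v blk n i x) $ k"
      using k M by (simp add: scalar_prod_def atLeast0LessThan)
    finally show "blk n i (kron (1\<^sub>m N) M *\<^sub>v x) $ k = (M *\<^sub>v blk n i x) $ k" .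
  qed
qed

lemma smult_mat_vec: "x \<in> carrier_vec (dim_col X) \<Longrightarrow> (c \<cdot>\<^sub>m X) *\<^sub>v x = c \<cdot>\<^sub>v (X *\<^sub>v (x::real vec))"
  by (intro eq_vecI) (auto simp: scalar_prod_def sum_distrib_left mult.assoc intro!: sum.cong)

lemma bd_add: "bd N n X M \<Longrightarrow> bd N n Y M' \<Longrightarrow> bd N n (X + Y) (M + M')"
  unfolding bd_def
  by (auto simp: add_mult_distrib_mat_vec[of _ "N*n" "N*n"] add_mult_distrib_mat_vec[of _ n n]
      blk_add[of _ N n])

lemma bd_mult: "bd N n X M \<Longrightarrow> bd N n Y M' \<Longrightarrow> bd N n (X * Y) (M * M')"
  unfolding bd_def
  by (auto simp: assoc_mult_mat_vec[of _ "N*n" "N*n"] assoc_mult_mat_vec[of _ n n])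

lemma bd_smult: "bd N n X M \<Longrightarrow> bd N n (c \<cdot>\<^sub>m X) (c \<cdot>\<^sub>m M)"
  unfolding bd_def by (auto simp: smult_mat_vec blk_smult[of _ N n])

lemma bd_one: "bd N n (1\<^sub>m (N*n)) (1\<^sub>m n)"
  unfolding bd_def by auto

lemma bd_zero: "bd N n (0\<^sub>m (N*n) (N*n)) (0\<^sub>m n n)"
proof -
  have "\<And>k (x::real vec). x \<in> carrier_vec k \<Longrightarrow> 0\<^sub>m k k *\<^sub>v x = 0\<^sub>v k"
    by (intro eq_vecI) auto
  then show ?thesis unfolding bd_def by (auto simp: blk_zero)
qed

lemma bd_pow: "bd N n X M \<Longrightarrow> bd N n (X ^\<^sub>m k) (M ^\<^sub>m k)"
proof (induction k)
  case 0
  then have "dim_row X = N*n" "dim_row M = n" by (auto simp: bd_def)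
  then show ?case using bd_one by simp
next
  case (Suc k) then show ?case by (simp add: bd_mult)
qed

lemma bd_foldr: "bd N n X M \<Longrightarrow>
  bd N n (foldr (\<lambda>c Y. c \<cdot>\<^sub>m 1\<^sub>m (N*n) + X * Y) cs (0\<^sub>m (N*n) (N*n)))
         (foldr (\<lambda>c Y. c \<cdot>\<^sub>m 1\<^sub>m n + M * Y) cs (0\<^sub>m n n))"
  by (induction cs) (auto intro!: bd_add bd_smult bd_one bd_mult bd_zero)

lemma bd_poly: "bd N n X M \<Longrightarrow> bd N n (mat_poly_eval (N*n) q X) (mat_poly_eval n q M)"
  unfolding mat_poly_eval_def by (rule bd_foldr)

lemma bd_kernel: assumes "bd N n X M"
  shows "x \<in> mat_kernel X \<longleftrightarrow> x \<in> carrier_vec (N*n) \<and> (\<forall>i<N. blk n i x \<in> mat_kernel M)"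
proof -
  have X: "X \<in> carrier_mat (N*n) (N*n)" and M: "M \<in> carrier_mat n n" using assms by (auto simp: bd_def)
  show ?thesis
  proof (cases "x \<in> carrier_vec (N*n)")
    case True
    have "X *\<^sub>v x = 0\<^sub>v (N*n) \<longleftrightarrow> (\<forall>i<N. blk n i (X *\<^sub>v x) = blk n i (0\<^sub>v (N*n)))"
      using X True by (intro blk_eq_iff) auto
    also have "\<dots> \<longleftrightarrow> (\<forall>i<N. M *\<^sub>v blk n i x = 0\<^sub>v n)"
      using assms True by (auto simp: bd_def blk_zero)
    finally show ?thesis using X M True by (auto simp: mat_kernel)
  next
    case False then show ?thesis using X by (auto simp: mat_kernel)
  qed
qed

lemma mat_zero_iff_vec: assumes "X \<in> carrier_mat r c"
  shows "X = 0\<^sub>m r c \<longleftrightarrow> (\<forall>x\<in>carrier_vec c. X *\<^sub>v x = (0\<^sub>v r :: real vec))"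
proof
  assume h: "\<forall>x\<in>carrier_vec c. X *\<^sub>v x = 0\<^sub>v r"
  show "X = 0\<^sub>m r c"
  proof (rule eq_matI)
    fix i j assume i: "i < dim_row (0\<^sub>m r c :: real mat)" and j: "j < dim_col (0\<^sub>m r c :: real mat)"
    have "X $$ (i,j) = (X *\<^sub>v unit_vec c j) $ i" using assms i j by auto
    then show "X $$ (i,j) = 0\<^sub>m r c $$ (i,j)" using h i j by simp
  qed (use assms in auto)
qed (use assms in auto)

lemma bd_zero_iff: assumes "bd N n X M" "N > 0"
  shows "X = 0\<^sub>m (N*n) (N*n) \<longleftrightarrow> M = 0\<^sub>m n n"
proof -
  have X: "X \<in> carrier_mat (N*n) (N*n)" and M: "M \<in> carrier_mat n n" using assms by (auto simp: bd_def)
  have "X = 0\<^sub>m (N*n) (N*n) \<longleftrightarrow> (\<forall>x\<in>carrier_vec (N*n). X *\<^sub>v x = 0\<^sub>v (N*n))"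
    by (rule mat_zero_iff_vec[OF X])
  also have "\<dots> \<longleftrightarrow> (\<forall>x\<in>carrier_vec (N*n). \<forall>i<N. M *\<^sub>v blk n i x = 0\<^sub>v n)"
  proof -
    have "\<And>x. x\<in>carrier_vec (N*n) \<Longrightarrow> X *\<^sub>v x = 0\<^sub>v (N*n) \<longleftrightarrow> (\<forall>i<N. M *\<^sub>v blk n i x = 0\<^sub>v n)"
    proof -
      fix x :: "real vec" assume x: "x\<in>carrier_vec (N*n)"
      have "X *\<^sub>v x = 0\<^sub>v (N*n) \<longleftrightarrow> (\<forall>i<N. blk n i (X *\<^sub>v x) = blk n i (0\<^sub>v (N*n)))"
        using X x by (intro blk_eq_iff) auto
      also have "\<dots> \<longleftrightarrow> (\<forall>i<N. M *\<^sub>v blk n i x = 0\<^sub>v n)"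
        using assms x by (auto simp: bd_def blk_zero)
      finally show "?thesis x" .
    qed
    then show ?thesis by blast
  qed
  also have "\<dots> \<longleftrightarrow> (\<forall>y\<in>carrier_vec n. M *\<^sub>v y = 0\<^sub>v n)"
  proof
    assume h: "\<forall>x\<in>carrier_vec (N*n). \<forall>i<N. M *\<^sub>v blk n i x = 0\<^sub>v n"
    show "\<forall>y\<in>carrier_vec n. M *\<^sub>v y = 0\<^sub>v n"
    proof
      fix y :: "real vec" assume y: "y \<in> carrier_vec n"
      define x where "x = vec (N*n) (\<lambda>j. if j < n then y $ j else 0)"
      have "blk n 0 x = y" using y assms(2) idx_lt[of 0 N] by (intro eq_vecI) (auto simp: x_def)
      then show "M *\<^sub>v y = 0\<^sub>v n" using h[rule_format, of x 0] assms(2) by (simp add: x_def)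
    qed
  qed auto
  also have "\<dots> \<longleftrightarrow> M = 0\<^sub>m n n" using mat_zero_iff_vec[OF M] by simp
  finally show ?thesis .
qed

lemma zero_vec_iff: "(v::real vec) = 0\<^sub>v k \<longleftrightarrow> dim_vec v = k \<and> (\<forall>i<k. v $ i = 0)"
  by (auto simp: vec_eq_iff)

lemma vstack_mult: assumes G1: "G1 \<in> carrier_mat r1 c" and G2: "G2 \<in> carrier_mat r2 c"
  and y: "y \<in> carrier_vec c"
  shows "vstack G1 G2 *\<^sub>v y = 0\<^sub>v (r1 + r2) \<longleftrightarrow> G1 *\<^sub>v y = 0\<^sub>v r1 \<and> G2 *\<^sub>v y = 0\<^sub>v r2"
proof -
  have a: "(vstack G1 G2 *\<^sub>v y) $ i = (G1 *\<^sub>v y) $ i" if "i < r1" for i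
    using that G1 G2 y by (simp add: vstack_def scalar_prod_def)
  have b: "(vstack G1 G2 *\<^sub>v y) $ (r1 + i) = (G2 *\<^sub>v y) $ i" if "i < r2" for i
    using that G1 G2 y by (simp add: vstack_def scalar_prod_def)
  have d: "dim_vec (vstack G1 G2 *\<^sub>v y) = r1 + r2" using G1 G2 by (simp add: vstack_def)
  show ?thesis
  proof
    assume h: "vstack G1 G2 *\<^sub>v y = 0\<^sub>v (r1 + r2)"
    show "G1 *\<^sub>v y = 0\<^sub>v r1 \<and> G2 *\<^sub>v y = 0\<^sub>v r2"
      unfolding zero_vec_iff using G1 G2 h a b
      by (auto simp: zero_vec_iff)
  next
    assume h: "G1 *\<^sub>v y = 0\<^sub>v r1 \<and> G2 *\<^sub>v y = 0\<^sub>v r2"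
    show "vstack G1 G2 *\<^sub>v y = 0\<^sub>v (r1 + r2)"
      unfolding zero_vec_iff
    proof (intro conjI allI impI)
      show "dim_vec (vstack G1 G2 *\<^sub>v y) = r1 + r2" by (rule d)
      fix i assume i: "i < r1 + r2"
      show "(vstack G1 G2 *\<^sub>v y) $ i = 0"
      proof (cases "i < r1")
        case True then show ?thesis using a h by simp
      next
        case False
        then obtain t where "i = r1 + t" "t < r2" using i by (metis add_diff_inverse_nat add_less_cancel_left)
        then show ?thesis using b h by simp
      qed
    qed
  qed
qed

lemma row_off_Suc: "row_off C (Suc i) = row_off C i + dim_row (C i)"
  by (simp add: row_off_def)

lemma row_off_mono: "i \<le> j \<Longrightarrow> row_off C i \<le> row_off C j"
  unfolding row_off_def by (rule sum_mono2) auto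

lemma row_off_least: assumes t: "t < dim_row (C i)"
  shows "(LEAST i'. row_off C i + t < row_off C (Suc i')) = i"
proof (rule Least_equality)
  show "row_off C i + t < row_off C (Suc i)" using t by (simp add: row_off_Suc)
  fix i' assume h: "row_off C i + t < row_off C (Suc i')"
  show "i \<le> i'"
  proof (rule ccontr)
    assume "\<not> i \<le> i'"
    then have "row_off C (Suc i') \<le> row_off C i" by (intro row_off_mono) simp
    then show False using h by simp
  qed
qed

lemma row_off_decomp: "r < row_off C N \<Longrightarrow> \<exists>i<N. \<exists>t<dim_row (C i). r = row_off C i + t"
proof (induction N)
  case 0 then show ?case by (simp add: row_off_def)
next
  case (Suc N)
  show ?case
  proof (cases "r < row_off C N")
    case True then show ?thesis using Suc by (meson less_SucI)
  next
    case False
    then show ?thesis using Suc.prems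
      by (intro exI[of _ N]) (auto simp: row_off_Suc intro!: exI[of _ "r - row_off C N"])
  qed
qed

lemma block_diag_entry: assumes i: "i < N" and t: "t < dim_row (C i)" and Ci: "dim_col (C i) = n"
  and y: "y \<in> carrier_vec (N*n)"
  shows "(block_diag N n C *\<^sub>v y) $ (row_off C i + t) = (C i *\<^sub>v blk n i y) $ t"
proof -
  have r: "row_off C i + t < row_off C N"
    using row_off_mono[of "Suc i" N C] i t by (simp add: row_off_Suc)
  have "(block_diag N n C *\<^sub>v y) $ (row_off C i + t) =
      (\<Sum>c<N*n. (if c div n = i then C i $$ (t, c mod n) else 0) * y $ c)"
    using r y by (simp add: block_diag_def scalar_prod_def row_off_least[of t C i, OF t] atLeast0LessThan, intro sum.cong, auto)
  also have "\<dots> = (\<Sum>a<N. \<Sum>b<n. (if (a*n+b) div n = i then C i $$ (t, (a*n+b) mod n) else 0) * y $ (a*n+b))"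
    by (rule sum_blocks)
  also have "\<dots> = (\<Sum>a<N. if a = i then (\<Sum>b<n. C i $$ (t, b) * y $ (i*n+b)) else 0)"
  proof (rule sum.cong[OF refl])
    fix a assume a: "a \<in> {..<N}"
    show "(\<Sum>b<n. (if (a*n+b) div n = i then C i $$ (t, (a*n+b) mod n) else 0) * y $ (a*n+b)) =
          (if a = i then (\<Sum>b<n. C i $$ (t, b) * y $ (i*n+b)) else 0)"
      by (auto intro!: sum.cong sum.neutral)
  qed
  also have "\<dots> = (\<Sum>b<n. C i $$ (t, b) * y $ (i*n+b))" using i by simp
  also have "\<dots> = (C i *\<^sub>v blk n i y) $ t"
    using t Ci by (simp add: scalar_prod_def atLeast0LessThan)
  finally show ?thesis .
qed

lemma block_diag_mult: assumes C: "\<And>i. i < N \<Longrightarrow> C i \<in> carrier_mat (m i) n"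
  and y: "y \<in> carrier_vec (N*n)"
  shows "block_diag N n C *\<^sub>v y = 0\<^sub>v (row_off C N) \<longleftrightarrow> (\<forall>i<N. C i *\<^sub>v blk n i y = 0\<^sub>v (m i))"
proof -
  have d: "dim_vec (block_diag N n C *\<^sub>v y) = row_off C N" by (simp add: block_diag_def)
  have "block_diag N n C *\<^sub>v y = 0\<^sub>v (row_off C N) \<longleftrightarrow>
      (\<forall>r<row_off C N. (block_diag N n C *\<^sub>v y) $ r = 0)"
    using d by (simp add: zero_vec_iff)
  also have "\<dots> \<longleftrightarrow> (\<forall>i<N. \<forall>t<dim_row (C i). (block_diag N n C *\<^sub>v y) $ (row_off C i + t) = 0)"
  proof
    assume h: "\<forall>r<row_off C N. (block_diag N n C *\<^sub>v y) $ r = 0"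
    show "\<forall>i<N. \<forall>t<dim_row (C i). (block_diag N n C *\<^sub>v y) $ (row_off C i + t) = 0"
    proof (intro allI impI)
      fix i t assume i: "i < N" and t: "t < dim_row (C i)"
      have "row_off C i + t < row_off C N"
        using row_off_mono[of "Suc i" N C] i t by (simp add: row_off_Suc)
      then show "(block_diag N n C *\<^sub>v y) $ (row_off C i + t) = 0" using h by simp
    qed
  next
    assume h: "\<forall>i<N. \<forall>t<dim_row (C i). (block_diag N n C *\<^sub>v y) $ (row_off C i + t) = 0"
    show "\<forall>r<row_off C N. (block_diag N n C *\<^sub>v y) $ r = 0"
      using h row_off_decomp[of _ C N] by blast
  qed
  also have "\<dots> \<longleftrightarrow> (\<forall>i<N. \<forall>t<m i. (C i *\<^sub>v blk n i y) $ t = 0)"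
  proof -
    have "\<And>i t. i < N \<Longrightarrow> t < m i \<Longrightarrow> (block_diag N n C *\<^sub>v y) $ (row_off C i + t) = (C i *\<^sub>v blk n i y) $ t"
      using block_diag_entry[of _ N _ C n y] C y by (metis carrier_matD(1) carrier_matD(2))
    moreover have "\<And>i. i < N \<Longrightarrow> dim_row (C i) = m i" using C by auto
    ultimately show ?thesis by auto
  qed
  also have "\<dots> \<longleftrightarrow> (\<forall>i<N. C i *\<^sub>v blk n i y = 0\<^sub>v (m i))"
    using C by (auto simp: zero_vec_iff)
  finally show ?thesis .
qed



lemma pow_mat_Suc': "A \<in> carrier_mat n n \<Longrightarrow> A ^\<^sub>m Suc k = A * A ^\<^sub>m k"
proof (induction k)
  case 0 then show ?case by simp
next
  case (Suc k)
  have "A ^\<^sub>m Suc (Suc k) = (A * A ^\<^sub>m k) * A" using Suc by simp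
  also have "\<dots> = A * (A ^\<^sub>m k * A)" using Suc.prems by (intro assoc_mult_mat) auto
  finally show ?case by simp
qed

lemma mat_vec_zero[simp]: "A \<in> carrier_mat r c \<Longrightarrow> A *\<^sub>v 0\<^sub>v c = (0\<^sub>v r :: real vec)"
  by (intro eq_vecI) auto

lemma powv_carrier[simp]: "A \<in> carrier_mat n n \<Longrightarrow> (v::real vec) \<in> carrier_vec n \<Longrightarrow> A ^\<^sub>m i *\<^sub>v v \<in> carrier_vec n"
  by (intro mult_mat_vec_carrier[of _ n n]) auto

lemma krylov:
  fixes A :: "real mat" and v :: "real vec"
  assumes A: "A \<in> carrier_mat n n" and v: "v \<in> carrier_vec n" and C: "C \<in> carrier_mat r n"
    and h: "\<And>j. j < n \<Longrightarrow> C *\<^sub>v (A ^\<^sub>m j *\<^sub>v v) = 0\<^sub>v r"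
  shows "C *\<^sub>v (A ^\<^sub>m j *\<^sub>v v) = 0\<^sub>v r"
proof -
  interpret V: vec_space "TYPE(real)" n .
  define S where "S k = (\<lambda>i. A ^\<^sub>m i *\<^sub>v v) ` {..<k}" for k
  have Sc: "S k \<subseteq> carrier_vec n" for k using A v by (auto simp: S_def intro!: mult_mat_vec_carrier[of _ n n])
  have "\<exists>k\<le>n. A ^\<^sub>m k *\<^sub>v v \<in> V.span (S k)"
  proof (rule ccontr)
    assume "\<not> ?thesis"
    then have nsp: "\<And>k. k \<le> n \<Longrightarrow> A ^\<^sub>m k *\<^sub>v v \<notin> V.span (S k)" by auto
    have "k \<le> Suc n \<Longrightarrow> V.lin_indpt (S k) \<and> card (S k) = k" for k
    proof (induction k)
      case 0 then show ?case by (simp add: S_def V.lin_dep_def)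
    next
      case (Suc k)
      then have IH: "V.lin_indpt (S k)" "card (S k) = k" and kn: "k \<le> n" by auto
      have ni: "A ^\<^sub>m k *\<^sub>v v \<notin> S k" using nsp[OF kn] V.in_own_span[OF Sc[of k]] by auto
      have SS: "S (Suc k) = S k \<union> {A ^\<^sub>m k *\<^sub>v v}" by (auto simp: S_def lessThan_Suc)
      have "\<not> V.lin_dep (S k \<union> {A ^\<^sub>m k *\<^sub>v v})"
      proof -
        have "A ^\<^sub>m k *\<^sub>v v \<in> carrier_vec n" using A v by (intro mult_mat_vec_carrier[of _ n n]) auto
        then show ?thesis using V.lin_dep_iff_in_span[OF Sc IH(1) _ ni] nsp[OF kn] by auto
      qed
      moreover have "card (S (Suc k)) = Suc k" using SS ni IH(2)
        by (simp add: S_def)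
      ultimately show ?case using SS by simp
    qed
    from this[of "Suc n"] have "V.lin_indpt (S (Suc n))" "card (S (Suc n)) = Suc n" by auto
    with V.li_le_dim(2)[OF V.fin_dim Sc[of "Suc n"]] V.dim_is_n show False by auto
  qed
  then obtain k where kn: "k \<le> n" and hk: "A ^\<^sub>m k *\<^sub>v v \<in> V.span (S k)" by auto
  have sub: "submodule class_ring (V.span (S k)) V.V" by (rule V.span_is_submodule[OF Sc])
  define W where "W = {u \<in> carrier_vec n. A *\<^sub>v u \<in> V.span (S k)}"
  have subW: "submodule class_ring W V.V"
    unfolding submodule_def
  proof (intro conjI)
    show "module class_ring V.V" using V.module_axioms by simp
    show "W \<subseteq> carrier V.V" by (auto simp: W_def)
    show "\<forall>v w. v \<in> W \<longrightarrow> w \<in> W \<longrightarrow> v \<oplus>\<^bsub>V.V\<^esub> w \<in> W"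
      using A submodule.m_closed[OF sub] by (auto simp: W_def mult_add_distrib_mat_vec[of _ n n])
    show "\<zero>\<^bsub>V.V\<^esub> \<in> W"
      using A submodule.zero_closed[OF sub] by (auto simp: W_def)
    show "\<forall>c v. c \<in> carrier class_ring \<longrightarrow> v \<in> W \<longrightarrow> c \<odot>\<^bsub>V.V\<^esub> v \<in> W"
      using A submodule.smult_closed[OF sub] by (auto simp: W_def mult_mat_vec[of _ n n])
  qed
  have SW: "S k \<subseteq> W"
  proof
    fix u assume "u \<in> S k"
    then obtain i where i: "i < k" and u: "u = A ^\<^sub>m i *\<^sub>v v" by (auto simp: S_def)
    have "A *\<^sub>v u = A ^\<^sub>m Suc i *\<^sub>v v" using A v u by (subst pow_mat_Suc'[OF A]) (simp add: assoc_mult_mat_vec[OF A pow_carrier_mat[OF A] v])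
    moreover have "A ^\<^sub>m Suc i *\<^sub>v v \<in> V.span (S k)"
    proof (cases "Suc i = k")
      case True then show ?thesis using hk by simp
    next
      case False
      then have "Suc i < k" using i by simp
      then have "A ^\<^sub>m Suc i *\<^sub>v v \<in> S k" unfolding S_def by (intro imageI) simp
      then show ?thesis using V.in_own_span[OF Sc] by auto
    qed
    ultimately show "u \<in> W" using u A v by (auto simp: W_def)
  qed
  have spW: "V.span (S k) \<subseteq> W" by (rule V.span_is_subset[OF SW subW])
  have "A ^\<^sub>m j *\<^sub>v v \<in> V.span (S k)" for j
  proof (induction j)
    case 0
    show ?case
    proof (cases k)
      case 0 then show ?thesis using hk by simp
    next
      case (Suc k')
      then have "0 < k" by simp
      then have "A ^\<^sub>m 0 *\<^sub>v v \<in> S k" unfolding S_def by (intro imageI) simp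
      then show ?thesis using V.in_own_span[OF Sc] by auto
    qed
  next
    case (Suc j)
    then have "A *\<^sub>v (A ^\<^sub>m j *\<^sub>v v) \<in> V.span (S k)" using spW by (auto simp: W_def)
    then show ?case using A v by (subst pow_mat_Suc'[OF A]) (simp add: assoc_mult_mat_vec[OF A pow_carrier_mat[OF A] v])
  qed
  then have jin: "A ^\<^sub>m j *\<^sub>v v \<in> V.span (S k)" .
  define K where "K = {u \<in> carrier_vec n. C *\<^sub>v u = 0\<^sub>v r}"
  have subK: "submodule class_ring K V.V"
    unfolding submodule_def
  proof (intro conjI)
    show "module class_ring V.V" using V.module_axioms by simp
    show "K \<subseteq> carrier V.V" by (auto simp: K_def)
    show "\<forall>v w. v \<in> K \<longrightarrow> w \<in> K \<longrightarrow> v \<oplus>\<^bsub>V.V\<^esub> w \<in> K"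
      using C by (auto simp: K_def mult_add_distrib_mat_vec[of _ r n])
    show "\<zero>\<^bsub>V.V\<^esub> \<in> K"
      using C by (auto simp: K_def)
    show "\<forall>c v. c \<in> carrier class_ring \<longrightarrow> v \<in> K \<longrightarrow> c \<odot>\<^bsub>V.V\<^esub> v \<in> K"
      using C by (auto simp: K_def mult_mat_vec[of _ r n])
  qed
  have "S k \<subseteq> K" using h kn A v C by (auto simp: S_def K_def)
  then have "V.span (S k) \<subseteq> K" by (rule V.span_is_subset[OF _ subK])
  then show ?thesis using jin by (auto simp: K_def)
qed


lemma prop_aux: "(X \<longleftrightarrow> P \<and> Q \<and> R) \<Longrightarrow> (Y \<longleftrightarrow> Q \<and> P' \<and> R) \<Longrightarrow> (P \<longleftrightarrow> P') \<Longrightarrow> (X \<longleftrightarrow> Y)"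
  by blast

lemma main_eq:
  fixes n N p :: nat and A H :: "real mat" and C :: "nat \<Rightarrow> real mat" and m :: "nat \<Rightarrow> nat"
    and L :: "real mat"
  assumes A: "A \<in> carrier_mat n n"
    and C: "\<And>i. i < N \<Longrightarrow> C i \<in> carrier_mat (m i) n"
    and H: "H \<in> carrier_mat p n"
    and L: "L \<in> carrier_mat N N"
  shows "undetectable_subspace (N * n) (vstack (block_diag N n C) (kron L H)) (kron (1\<^sub>m N) A)
       = unobservable_subspace (N * n) (kron L H) (kron (1\<^sub>m N) A)
           \<inter> prod_subspaces N n (\<lambda>i. undetectable_subspace n (C i) A)"
proof -
  define Ab where "Ab = kron (1\<^sub>m N) A"
  define Hb where "Hb = kron L H"
  define Cb where "Cb = block_diag N n C"
  have bdA: "bd N n Ab A" unfolding Ab_def by (rule bd_kron[OF A])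
  have Abc: "Ab \<in> carrier_mat (N*n) (N*n)" using bdA by (simp add: bd_def)
  have Hbc: "Hb \<in> carrier_mat (N*p) (N*n)" using L H by (simp add: Hb_def kron_def)
  have Cbc: "Cb \<in> carrier_mat (row_off C N) (N*n)" by (simp add: Cb_def block_diag_def)
  have VS: "vstack Cb Hb \<in> carrier_mat (row_off C N + N*p) (N*n)"
    using Cbc Hbc by (simp add: vstack_def)
  have bdAk: "bd N n (Ab ^\<^sub>m k) (A ^\<^sub>m k)" for k by (rule bd_pow[OF bdA])
  have Akc: "Ab ^\<^sub>m k \<in> carrier_mat (N*n) (N*n)" for k using Abc by simp
  have obs: "(vstack Cb Hb * Ab ^\<^sub>m k) *\<^sub>v x = 0\<^sub>v (dim_row (vstack Cb Hb)) \<longleftrightarrow>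
      (\<forall>i<N. C i *\<^sub>v (A ^\<^sub>m k *\<^sub>v blk n i x) = 0\<^sub>v (m i)) \<and>
      (Hb * Ab ^\<^sub>m k) *\<^sub>v x = 0\<^sub>v (dim_row Hb)"
    if x: "x \<in> carrier_vec (N*n)" for x k
  proof -
    have y: "Ab ^\<^sub>m k *\<^sub>v x \<in> carrier_vec (N*n)" using Akc x by (intro mult_mat_vec_carrier[of _ "N*n" "N*n"]) auto
    have "(vstack Cb Hb * Ab ^\<^sub>m k) *\<^sub>v x = vstack Cb Hb *\<^sub>v (Ab ^\<^sub>m k *\<^sub>v x)"
      by (rule assoc_mult_mat_vec[OF VS Akc x])
    moreover have "(Hb * Ab ^\<^sub>m k) *\<^sub>v x = Hb *\<^sub>v (Ab ^\<^sub>m k *\<^sub>v x)"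
      by (rule assoc_mult_mat_vec[OF Hbc Akc x])
    moreover have "vstack Cb Hb *\<^sub>v (Ab ^\<^sub>m k *\<^sub>v x) = 0\<^sub>v (row_off C N + N*p) \<longleftrightarrow>
        Cb *\<^sub>v (Ab ^\<^sub>m k *\<^sub>v x) = 0\<^sub>v (row_off C N) \<and> Hb *\<^sub>v (Ab ^\<^sub>m k *\<^sub>v x) = 0\<^sub>v (N*p)"
      by (rule vstack_mult[OF Cbc Hbc y])
    moreover have "Cb *\<^sub>v (Ab ^\<^sub>m k *\<^sub>v x) = 0\<^sub>v (row_off C N) \<longleftrightarrow>
        (\<forall>i<N. C i *\<^sub>v blk n i (Ab ^\<^sub>m k *\<^sub>v x) = 0\<^sub>v (m i))"
      unfolding Cb_def by (rule block_diag_mult[OF C y])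
    moreover have "\<And>i. i < N \<Longrightarrow> blk n i (Ab ^\<^sub>m k *\<^sub>v x) = A ^\<^sub>m k *\<^sub>v blk n i x"
      using bdAk x by (simp add: bd_def)
    ultimately show ?thesis using VS Hbc by simp
  qed
  have ker: "x \<in> mat_kernel (mat_poly_eval (N*n) (unstable_part (min_poly (N*n) Ab)) Ab) \<longleftrightarrow>
      x \<in> carrier_vec (N*n) \<and> (\<forall>i<N. blk n i x \<in> mat_kernel (mat_poly_eval n (unstable_part (min_poly n A)) A))"
    for x
  proof (cases "N = 0")
    case True
    then show ?thesis using bd_kernel[OF bd_poly[OF bdA]] by simp
  next
    case False
    have "min_poly (N*n) Ab = min_poly n A"
    proof -
      have "\<And>q. mat_poly_eval (N*n) q Ab = 0\<^sub>m (N*n) (N*n) \<longleftrightarrow> mat_poly_eval n q A = 0\<^sub>m n n"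
        using bd_zero_iff[OF bd_poly[OF bdA]] False by simp
      then show ?thesis unfolding min_poly_def by simp
    qed
    then show ?thesis using bd_kernel[OF bd_poly[OF bdA]] by simp
  qed
  show ?thesis
  proof (rule Set.set_eqI)
    fix x
    show "x \<in> undetectable_subspace (N * n) (vstack (block_diag N n C) (kron L H)) (kron (1\<^sub>m N) A) \<longleftrightarrow>
      x \<in> unobservable_subspace (N * n) (kron L H) (kron (1\<^sub>m N) A)
           \<inter> prod_subspaces N n (\<lambda>i. undetectable_subspace n (C i) A)"
    proof (cases "x \<in> carrier_vec (N*n)")
      case False
      then show ?thesis by (simp add: undetectable_subspace_def unobservable_subspace_def)
    next
      case x: True
      have cA: "\<And>i k. i < N \<Longrightarrow> (C i * A ^\<^sub>m k) *\<^sub>v blk n i x = C i *\<^sub>v (A ^\<^sub>m k *\<^sub>v blk n i x)"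
        using C A by (intro assoc_mult_mat_vec[of _ _ n _ n]) auto
      have dC: "\<And>i. i < N \<Longrightarrow> dim_row (C i) = m i" using C by auto
      have obsC: "(\<forall>l\<in>{1..N*n}. \<forall>i<N. C i *\<^sub>v (A ^\<^sub>m (l-1) *\<^sub>v blk n i x) = 0\<^sub>v (m i)) \<longleftrightarrow>
         (\<forall>i<N. \<forall>l\<in>{1..n}. C i *\<^sub>v (A ^\<^sub>m (l-1) *\<^sub>v blk n i x) = 0\<^sub>v (m i))"
      proof (cases "N = 0")
        case True then show ?thesis by simp
      next
        case False
        then have nn: "n \<le> N * n" by simp
        show ?thesis
        proof
          assume h: "\<forall>l\<in>{1..N*n}. \<forall>i<N. C i *\<^sub>v (A ^\<^sub>m (l-1) *\<^sub>v blk n i x) = 0\<^sub>v (m i)"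
          show "\<forall>i<N. \<forall>l\<in>{1..n}. C i *\<^sub>v (A ^\<^sub>m (l-1) *\<^sub>v blk n i x) = 0\<^sub>v (m i)"
          proof (intro allI impI ballI)
            fix i l assume "i < N" "l \<in> {1..n}"
            then show "C i *\<^sub>v (A ^\<^sub>m (l-1) *\<^sub>v blk n i x) = 0\<^sub>v (m i)"
              using h nn by (meson atLeastAtMost_iff order_trans)
          qed
        next
          assume h: "\<forall>i<N. \<forall>l\<in>{1..n}. C i *\<^sub>v (A ^\<^sub>m (l-1) *\<^sub>v blk n i x) = 0\<^sub>v (m i)"
          show "\<forall>l\<in>{1..N*n}. \<forall>i<N. C i *\<^sub>v (A ^\<^sub>m (l-1) *\<^sub>v blk n i x) = 0\<^sub>v (m i)"
          proof (intro ballI allI impI)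
            fix l i assume i: "i < N"
            have hj: "C i *\<^sub>v (A ^\<^sub>m j *\<^sub>v blk n i x) = 0\<^sub>v (m i)" if j: "j < n" for j
            proof -
              have "Suc j \<in> {1..n}" using j by simp
              from h[rule_format, OF i this] show ?thesis by simp
            qed
            show "C i *\<^sub>v (A ^\<^sub>m (l-1) *\<^sub>v blk n i x) = 0\<^sub>v (m i)"
              by (rule krylov[OF A blk_carrier(1) C[OF i] hj])
          qed
        qed
      qed
      let ?K = "mat_kernel (mat_poly_eval (N*n) (unstable_part (min_poly (N*n) Ab)) Ab)"
      let ?KA = "mat_kernel (mat_poly_eval n (unstable_part (min_poly n A)) A)"
      have s1: "x \<in> undetectable_subspace (N * n) (vstack Cb Hb) Ab \<longleftrightarrow>
          (\<forall>l\<in>{1..N*n}. (vstack Cb Hb * Ab ^\<^sub>m (l - 1)) *\<^sub>v x = 0\<^sub>v (dim_row (vstack Cb Hb))) \<and> x \<in> ?K"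
        unfolding undetectable_subspace_def by (simp only: Int_iff mem_Collect_eq x simp_thms)
      have s2: "(\<forall>l\<in>{1..N*n}. (vstack Cb Hb * Ab ^\<^sub>m (l - 1)) *\<^sub>v x = 0\<^sub>v (dim_row (vstack Cb Hb))) \<longleftrightarrow>
          (\<forall>l\<in>{1..N*n}. \<forall>i<N. C i *\<^sub>v (A ^\<^sub>m (l-1) *\<^sub>v blk n i x) = 0\<^sub>v (m i)) \<and>
          (\<forall>l\<in>{1..N*n}. (Hb * Ab ^\<^sub>m (l-1)) *\<^sub>v x = 0\<^sub>v (dim_row Hb))"
        by (simp only: obs[OF x] ball_conj_distrib)
      have s3: "x \<in> ?K \<longleftrightarrow> (\<forall>i<N. blk n i x \<in> ?KA)" by (simp only: ker[of x] x simp_thms)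
      have lhs: "x \<in> undetectable_subspace (N * n) (vstack Cb Hb) Ab \<longleftrightarrow>
          (\<forall>l\<in>{1..N*n}. \<forall>i<N. C i *\<^sub>v (A ^\<^sub>m (l-1) *\<^sub>v blk n i x) = 0\<^sub>v (m i)) \<and>
          (\<forall>l\<in>{1..N*n}. (Hb * Ab ^\<^sub>m (l-1)) *\<^sub>v x = 0\<^sub>v (dim_row Hb)) \<and>
          (\<forall>i<N. blk n i x \<in> ?KA)"
        by (simp only: s1 s2 s3 conj_assoc)
      have r1: "x \<in> unobservable_subspace (N * n) Hb Ab \<longleftrightarrow>
          (\<forall>l\<in>{1..N*n}. (Hb * Ab ^\<^sub>m (l-1)) *\<^sub>v x = 0\<^sub>v (dim_row Hb))"
        unfolding unobservable_subspace_def by (simp only: mem_Collect_eq x simp_thms)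
      have r2: "x \<in> prod_subspaces N n (\<lambda>i. undetectable_subspace n (C i) A) \<longleftrightarrow>
          (\<forall>i<N. blk n i x \<in> undetectable_subspace n (C i) A)"
        unfolding prod_subspaces_def blk_def[symmetric] by (simp only: mem_Collect_eq x simp_thms)
      have r3: "blk n i x \<in> undetectable_subspace n (C i) A \<longleftrightarrow>
          (\<forall>l\<in>{1..n}. C i *\<^sub>v (A ^\<^sub>m (l-1) *\<^sub>v blk n i x) = 0\<^sub>v (m i)) \<and> blk n i x \<in> ?KA"
        if i: "i < N" for i
        unfolding undetectable_subspace_def using cA[OF i] dC[OF i] by simp
      have rhs: "x \<in> unobservable_subspace (N * n) Hb Ab \<inter> prod_subspaces N n (\<lambda>i. undetectable_subspace n (C i) A) \<longleftrightarrow>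
          (\<forall>l\<in>{1..N*n}. (Hb * Ab ^\<^sub>m (l-1)) *\<^sub>v x = 0\<^sub>v (dim_row Hb)) \<and>
          (\<forall>i<N. \<forall>l\<in>{1..n}. C i *\<^sub>v (A ^\<^sub>m (l-1) *\<^sub>v blk n i x) = 0\<^sub>v (m i)) \<and>
          (\<forall>i<N. blk n i x \<in> ?KA)"
      proof -
        have r4: "(\<forall>i<N. blk n i x \<in> undetectable_subspace n (C i) A) \<longleftrightarrow>
          (\<forall>i<N. \<forall>l\<in>{1..n}. C i *\<^sub>v (A ^\<^sub>m (l-1) *\<^sub>v blk n i x) = 0\<^sub>v (m i)) \<and>
          (\<forall>i<N. blk n i x \<in> ?KA)"
          using r3 by blast
        show ?thesis by (simp only: Int_iff r1 r2 r4)
      qed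
      have "x \<in> undetectable_subspace (N * n) (vstack Cb Hb) Ab \<longleftrightarrow>
        x \<in> unobservable_subspace (N * n) Hb Ab \<inter> prod_subspaces N n (\<lambda>i. undetectable_subspace n (C i) A)"
        by (rule prop_aux[OF lhs rhs obsC])
      then show ?thesis unfolding Ab_def Hb_def Cb_def .
    qed
  qed
qed

theorem lemma1:
  fixes n N p :: nat and A H :: "real mat" and C :: "nat \<Rightarrow> real mat" and m :: "nat \<Rightarrow> nat"
    and E :: "(nat \<times> nat) set"
  assumes "A \<in> carrier_mat n n"
    and "\<And>i. i < N \<Longrightarrow> C i \<in> carrier_mat (m i) n"
    and "H \<in> carrier_mat p n"
    and "E \<subseteq> {0..<N} \<times> {0..<N}"
    and "\<And>i. (i, i) \<notin> E"
  shows "detectable (n * N)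
           (vstack (block_diag N n C) (kron (laplacian N E) H)) (kron (1\<^sub>m N) A)
         \<longleftrightarrow>
         unobservable_subspace (n * N) (kron (laplacian N E) H) (kron (1\<^sub>m N) A)
           \<inter> prod_subspaces N n (\<lambda>i. undetectable_subspace n (C i) A) = {0\<^sub>v (n * N)}"
proof -
  have L: "laplacian N E \<in> carrier_mat N N" by (simp add: laplacian_def)
  have nN: "n * N = N * n" by simp
  show ?thesis unfolding detectable_def nN
    using main_eq[OF assms(1) assms(2) assms(3) L] by simp
qed

end
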